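(* Let $\mu>0$ and $\gamma\in\mathbb{R}$. A number $z\in\mathbb{C}\setminus\Sigma_\mu$ is an eigenvalue of the operator $\mathcal{A}_\mu$ if and only if $\lambda=1$ is an eigenvalue of the integral operator $T_\mu(z)$ acting in $L_2(\mathbb{T}^3)$ by $$(T_\mu(z)g)(p)=\frac{\mu^2}{2\Delta_\mu(p;z)}\int_{\mathbb{T}^3}\frac{g(t)\,dt}{w_2(p,t)-z}.$$ Moreover, the multiplicity of $z$ as an eigenvalue of $\mathcal{A}_\mu$ equals the multiplicity of $1$ as an eigenvalue of $T_\mu(z)$.
   Context: $\mathbb{T}^3=(-\pi,\pi]^3$ is the three-dimensional torus with normalized Haar measure. $\mathcal{H}_1=L_2(\mathbb{T}^3)$, $\mathcal{H}_2=L_2^{\rm s}((\mathbb{T}^3)^2)$ (square-integrable symmetric functions $f(k,p)=f(p,k)$), $\mathcal{H}=\mathcal{H}_1\oplus\mathcal{H}_2$. Let $\varepsilon(k)=\sum_{i=1}^3(1-\cos k_i)$, $w_1(k)=\varepsilon(k)+\gamma$ with $\gamma\in\mathbb{R}$, and $w_2(k,p)=\varepsilon(k)+\varepsilon(\tfrac12(k+p))+\varepsilon(p)$. For $\mu>0$, $\mathcal{A}_\mu$ is the bounded self-adjoint operator on $\mathcal{H}$ given by $\mathcal{A}_\mu=\begin{pmatrix}A_{11}&\mu A_{12}\\ \mu A_{12}^*&A_{22}\end{pmatrix}$, where $(A_{11}f_1)(k)=w_1(k)f_1(k)$, $(A_{12}f_2)(k)=\int_{\mathbb{T}^3}f_2(k,s)\,ds$,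 $(A_{12}^*f_1)(k,p)=\tfrac12(f_1(k)+f_1(p))$, $(A_{22}f_2)(k,p)=w_2(k,p)f_2(k,p)$. For $k\in\mathbb{T}^3$ let $m(k)=\min_p w_2(k,p)$, $M(k)=\max_p w_2(k,p)$, $I(k;z)=\int_{\mathbb{T}^3}\frac{dt}{w_2(k,t)-z}$ and $\Delta_\mu(k;z)=w_1(k)-z-\frac{\mu^2}{2}I(k;z)$ for $z\in\mathbb{C}\setminus[m(k),M(k)]$. Let $\mathcal{A}_\mu(k)$ be the operator on $\mathbb{C}\oplus L_2(\mathbb{T}^3)$ given by $\mathcal{A}_\mu(k)(f_0,f_1)=\big(w_1(k)f_0+\tfrac{\mu}{\sqrt2}\int_{\mathbb{T}^3}f_1(t)dt,\ \tfrac{\mu}{\sqrt2}f_0+w_2(k,\cdot)f_1(\cdot)\big)$; its discrete spectrum is $\{z\in\mathbb{C}\setminus[m(k),M(k)]:\Delta_\mu(k;z)=0\}$. Set $m=\min_{k,p}w_2(k,p)$, $M=\max_{k,p}w_2(k,p)$, $\Lambda_\mu=\bigcup_{k\in\mathbb{T}^3}\sigma_{\rm disc}(\mathcal{A}_\mu(k))$, and $\Sigma_\mu=[m,M]\cup\Lambda_\mu$. *)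

theory Defs
  imports "HOL-Analysis.Analysis" "HOL-Library.Extended_Nat"
begin

type_synonym pt = "real^3"

definition T3 :: "pt set" where
  "T3 = {x. \<forall>i. - pi < x$i \<and> x$i \<le> pi}"

definition torus :: "pt measure" where
  "torus = density (restrict_space lborel T3) (\<lambda>_. ennreal (1 / (2*pi)^3))"

definition torus2 :: "(pt \<times> pt) measure" where
  "torus2 = torus \<Otimes>\<^sub>M torus"

definition eps :: "pt \<Rightarrow> real" where
  "eps k = (\<Sum>i\<in>UNIV. 1 - cos (k$i))"

definition w1 :: "real \<Rightarrow> pt \<Rightarrow> real" where
  "w1 gamma k = eps k + gamma"

definition w2 :: "pt \<Rightarrow> pt \<Rightarrow> real" where
  "w2 k p = eps k + eps ((1/2) *\<^sub>R (k + p)) + eps p"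

definition sq_int :: "'a measure \<Rightarrow> ('a \<Rightarrow> complex) \<Rightarrow> bool" where
  "sq_int M f \<longleftrightarrow> f \<in> borel_measurable M \<and> integrable M (\<lambda>x. (cmod (f x))^2)"

definition H1 :: "(pt \<Rightarrow> complex) set" where
  "H1 = {f. sq_int torus f}"

definition H2 :: "(pt \<times> pt \<Rightarrow> complex) set" where
  "H2 = {f. sq_int torus2 f \<and> (AE x in torus2. f x = f (snd x, fst x))}"

definition mlow :: "pt \<Rightarrow> real" where
  "mlow k = (INF p\<in>T3. w2 k p)"

definition Mup :: "pt \<Rightarrow> real" where
  "Mup k = (SUP p\<in>T3. w2 k p)"

definition mlow_all :: real where
  "mlow_all = (INF x\<in>T3 \<times> T3. w2 (fst x) (snd x))"

definition Mup_all :: real where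
  "Mup_all = (SUP x\<in>T3 \<times> T3. w2 (fst x) (snd x))"

definition Iint :: "pt \<Rightarrow> complex \<Rightarrow> complex" where
  "Iint k z = integral\<^sup>L torus (\<lambda>t. 1 / (complex_of_real (w2 k t) - z))"

definition Delta_mu :: "real \<Rightarrow> real \<Rightarrow> pt \<Rightarrow> complex \<Rightarrow> complex" where
  "Delta_mu mu gamma k z =
     complex_of_real (w1 gamma k) - z - complex_of_real (mu^2 / 2) * Iint k z"

text \<open>Lambda_mu: union over k of the discrete spectra of the fiber operators A_mu(k),
  i.e. the zeros of Delta_mu(k;.) outside [m(k),M(k)].\<close>
definition Lambda_mu :: "real \<Rightarrow> real \<Rightarrow> complex set" where
  "Lambda_mu mu gamma = {z. \<exists>k\<in>T3. z \<notin> complex_of_real ` {mlow k .. Mup k}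
                                   \<and> Delta_mu mu gamma k z = 0}"

definition Sigma_mu :: "real \<Rightarrow> real \<Rightarrow> complex set" where
  "Sigma_mu mu gamma = complex_of_real ` {mlow_all .. Mup_all} \<union> Lambda_mu mu gamma"

definition A1 :: "real \<Rightarrow> real \<Rightarrow> (pt \<Rightarrow> complex) \<Rightarrow> (pt \<times> pt \<Rightarrow> complex) \<Rightarrow> pt \<Rightarrow> complex" where
  "A1 mu gamma f1 f2 k =
     complex_of_real (w1 gamma k) * f1 k + complex_of_real mu * integral\<^sup>L torus (\<lambda>s. f2 (k, s))"

definition A2 :: "real \<Rightarrow> (pt \<Rightarrow> complex) \<Rightarrow> (pt \<times> pt \<Rightarrow> complex) \<Rightarrow> pt \<times> pt \<Rightarrow> complex" where
  "A2 mu f1 f2 x =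
     complex_of_real mu * ((f1 (fst x) + f1 (snd x)) / 2)
     + complex_of_real (w2 (fst x) (snd x)) * f2 x"

definition eigvecs_A :: "real \<Rightarrow> real \<Rightarrow> complex \<Rightarrow> ((pt \<Rightarrow> complex) \<times> (pt \<times> pt \<Rightarrow> complex)) set" where
  "eigvecs_A mu gamma z = {(f1, f2). f1 \<in> H1 \<and> f2 \<in> H2
      \<and> (AE k in torus. A1 mu gamma f1 f2 k = z * f1 k)
      \<and> (AE x in torus2. A2 mu f1 f2 x = z * f2 x)}"

definition null_H :: "(pt \<Rightarrow> complex) \<times> (pt \<times> pt \<Rightarrow> complex) \<Rightarrow> bool" where
  "null_H f \<longleftrightarrow> (AE k in torus. fst f k = 0) \<and> (AE x in torus2. snd f x = 0)"

definition lincomb_H :: "nat \<Rightarrow> (nat \<Rightarrow> complex) \<Rightarrow> (nat \<Rightarrow> (pt \<Rightarrow> complex) \<times> (pt \<times> pt \<Rightarrow> complex))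
     \<Rightarrow> (pt \<Rightarrow> complex) \<times> (pt \<times> pt \<Rightarrow> complex)" where
  "lincomb_H n c F = ((\<lambda>k. \<Sum>i<n. c i * fst (F i) k), (\<lambda>x. \<Sum>i<n. c i * snd (F i) x))"

definition is_eigenvalue_A :: "real \<Rightarrow> real \<Rightarrow> complex \<Rightarrow> bool" where
  "is_eigenvalue_A mu gamma z \<longleftrightarrow> (\<exists>f\<in>eigvecs_A mu gamma z. \<not> null_H f)"

text \<open>Multiplicity = dimension of the eigenspace (elements modulo a.e. equality), in enat.\<close>
definition mult_A :: "real \<Rightarrow> real \<Rightarrow> complex \<Rightarrow> enat" where
  "mult_A mu gamma z = Sup {enat n | n. \<exists>F. (\<forall>i<n. F i \<in> eigvecs_A mu gamma z) \<and>
      (\<forall>c. null_H (lincomb_H n c F) \<longrightarrow> (\<forall>i<n. c i = 0))}"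

definition T_op :: "real \<Rightarrow> real \<Rightarrow> complex \<Rightarrow> (pt \<Rightarrow> complex) \<Rightarrow> pt \<Rightarrow> complex" where
  "T_op mu gamma z g p =
     complex_of_real (mu^2) / (2 * Delta_mu mu gamma p z)
     * integral\<^sup>L torus (\<lambda>t. g t / (complex_of_real (w2 p t) - z))"

definition eigvecs_T :: "real \<Rightarrow> real \<Rightarrow> complex \<Rightarrow> complex \<Rightarrow> (pt \<Rightarrow> complex) set" where
  "eigvecs_T mu gamma z lam = {g. g \<in> H1 \<and> (AE p in torus. T_op mu gamma z g p = lam * g p)}"

definition is_eigenvalue_T :: "real \<Rightarrow> real \<Rightarrow> complex \<Rightarrow> complex \<Rightarrow> bool" where
  "is_eigenvalue_T mu gamma z lam \<longleftrightarrow>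
     (\<exists>g\<in>eigvecs_T mu gamma z lam. \<not> (AE p in torus. g p = 0))"

definition mult_T :: "real \<Rightarrow> real \<Rightarrow> complex \<Rightarrow> complex \<Rightarrow> enat" where
  "mult_T mu gamma z lam = Sup {enat n | n. \<exists>G. (\<forall>i<n. G i \<in> eigvecs_T mu gamma z lam) \<and>
      (\<forall>c. (AE p in torus. (\<Sum>i<n. c i * G i p) = 0) \<longrightarrow> (\<forall>i<n. c i = 0))}"

end

theory Submission
  imports Defs
begin

lemma T3_borel: "T3 \<in> sets borel"
proof -
  have "T3 = (\<Inter>i. {x::pt. - pi < x$i} \<inter> {x. x$i \<le> pi})" unfolding T3_def by auto
  also have "\<dots> \<in> sets borel"
    by (intro sets.finite_INT) (auto intro!: borel_open borel_closed open_Collect_less closed_Collect_le continuous_intros)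
  finally show ?thesis .
qed

lemma T3_sub: "T3 \<subseteq> cbox (\<chi> i. - pi) (\<chi> i. pi)"
  unfolding T3_def by (auto simp: mem_box_cart less_imp_le)

lemma space_torus[simp]: "space torus = T3"
  unfolding torus_def by (simp add: space_restrict_space)

lemma space_torus2[simp]: "space torus2 = T3 \<times> T3"
  unfolding torus2_def by (simp add: space_pair_measure)

lemma meas_torus: "f \<in> borel_measurable borel \<Longrightarrow> f \<in> borel_measurable torus"
  unfolding torus_def by (simp add: measurable_restrict_space1)

lemma finite_torus: "finite_measure torus"
proof -
  have f: "finite_measure (restrict_space lborel T3)"
  proof (rule finite_measureI)
    have "emeasure (restrict_space lborel T3) (space (restrict_space lborel T3)) = emeasure lborel T3"
      using T3_borel by (simp add: space_restrict_space emeasure_restrict_space)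
    also have "\<dots> \<le> emeasure lborel (cbox (\<chi> i. - pi) (\<chi> i. pi) :: pt set)"
      using T3_sub by (intro emeasure_mono) auto
    also have "\<dots> < \<infinity>" by (rule emeasure_lborel_cbox_finite)
    finally show "emeasure (restrict_space lborel T3) (space (restrict_space lborel T3)) \<noteq> \<infinity>" by simp
  qed
  show ?thesis unfolding torus_def
  proof (rule finite_measureI)
    let ?M = "restrict_space lborel T3"
    have "emeasure (density ?M (\<lambda>_. ennreal (1 / (2 * pi) ^ 3))) (space ?M)
       = (\<integral>\<^sup>+ x. ennreal (1 / (2 * pi) ^ 3) * indicator (space ?M) x \<partial>?M)"
      by (rule emeasure_density) auto
    also have "\<dots> = ennreal (1 / (2 * pi) ^ 3) * emeasure ?M (space ?M)"
      by (rule nn_integral_cmult_indicator) auto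
    also have "\<dots> < \<infinity>" using finite_measure.emeasure_finite[OF f]
      by (simp add: ennreal_mult_less_top less_top)
    finally show "emeasure (density ?M (\<lambda>_. ennreal (1 / (2 * pi) ^ 3))) (space (density ?M (\<lambda>_. ennreal (1 / (2 * pi) ^ 3)))) \<noteq> \<infinity>"
      by simp
  qed
qed

lemma eps_nonneg: "0 \<le> eps k"
  unfolding eps_def by (intro sum_nonneg) (simp add: cos_le_one)

lemma eps_le: "eps k \<le> 6"
proof -
  have "eps k \<le> (\<Sum>i\<in>(UNIV::3 set). 2)"
    unfolding eps_def by (intro sum_mono) (smt (verit) cos_ge_minus_one)
  also have "\<dots> = 6" by simp
  finally show ?thesis .
qed

lemma w2_bounds: "0 \<le> w2 k p" "w2 k p \<le> 18"
  unfolding w2_def using eps_nonneg eps_le by (smt (verit))+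

lemma w2_sym: "w2 k p = w2 p k"
  unfolding w2_def by (simp add: add.commute add.left_commute)

lemma eps_cont: "continuous_on UNIV eps"
  unfolding eps_def by (intro continuous_intros)

lemma eps_meas: "eps \<in> borel_measurable borel"
  using eps_cont borel_measurable_continuous_onI by blast

lemma w2_meas: "(\<lambda>x. w2 (fst x) (snd x)) \<in> borel_measurable borel"
proof -
  have "continuous_on UNIV (\<lambda>x::pt\<times>pt. w2 (fst x) (snd x))"
    unfolding w2_def
    by (intro continuous_intros continuous_on_compose2[OF eps_cont]) auto
  then show ?thesis using borel_measurable_continuous_onI by blast
qed

lemma id_torus2: "(\<lambda>x. x) \<in> measurable torus2 (borel :: (pt\<times>pt) measure)"
proof -
  have i: "(\<lambda>x. x) \<in> measurable torus (borel :: pt measure)"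
    by (rule meas_torus) simp
  have "(\<lambda>x. (fst x, snd x)) \<in> measurable torus2 (borel \<Otimes>\<^sub>M (borel :: pt measure))"
    unfolding torus2_def
    by (intro measurable_Pair measurable_compose[OF measurable_fst i] measurable_compose[OF measurable_snd i])
  then show ?thesis by (simp add: borel_prod)
qed

lemma meas_torus2: "f \<in> borel_measurable borel \<Longrightarrow> f \<in> borel_measurable torus2"
  using measurable_comp[OF id_torus2] by (simp add: comp_def)

lemma zero_T3: "(0::pt) \<in> T3" unfolding T3_def by auto

lemma w2_in: "a \<in> T3 \<Longrightarrow> b \<in> T3 \<Longrightarrow> mlow_all \<le> w2 a b \<and> w2 a b \<le> Mup_all"
proof -
  assume a: "a \<in> T3" and b: "b \<in> T3"
  have 1: "bdd_below ((\<lambda>x. w2 (fst x) (snd x)) ` (T3 \<times> T3))"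
    by (rule bdd_belowI2[where m=0]) (simp add: w2_bounds)
  have 2: "bdd_above ((\<lambda>x. w2 (fst x) (snd x)) ` (T3 \<times> T3))"
    by (rule bdd_aboveI2[where M=18]) (simp add: w2_bounds)
  show ?thesis unfolding mlow_all_def Mup_all_def
    using cINF_lower[OF 1, of "(a,b)"] cSUP_upper[OF _ 2, of "(a,b)"] a b by auto
qed

lemma pst: "pair_sigma_finite torus torus"
  using finite_torus by (metis finite_measure_def pair_sigma_finite_def)

lemma torus_meas_fst: "g \<in> borel_measurable torus \<Longrightarrow> (\<lambda>x. g (fst x)) \<in> borel_measurable torus2"
  unfolding torus2_def by (rule measurable_compose[OF measurable_fst])
lemma torus_meas_snd: "g \<in> borel_measurable torus \<Longrightarrow> (\<lambda>x. g (snd x)) \<in> borel_measurable torus2"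
  unfolding torus2_def by (rule measurable_compose[OF measurable_snd])

lemma w2k_meas: "(\<lambda>t. w2 k t) \<in> borel_measurable torus"
proof -
  have "continuous_on UNIV (\<lambda>t. w2 k t)"
    unfolding w2_def
    by (intro continuous_intros continuous_on_compose2[OF eps_cont]) auto
  then show ?thesis using borel_measurable_continuous_onI meas_torus by blast
qed

definition F2 :: "real \<Rightarrow> complex \<Rightarrow> (pt \<Rightarrow> complex) \<Rightarrow> pt \<times> pt \<Rightarrow> complex" where
  "F2 mu z g x = - (complex_of_real mu * (g (fst x) + g (snd x))) / (2 * (complex_of_real (w2 (fst x) (snd x)) - z))"

lemma H1_L1: assumes "g \<in> H1" shows "integrable torus g"
proof -
  interpret T: finite_measure torus by (rule finite_torus)
  have m: "g \<in> borel_measurable torus" and i: "integrable torus (\<lambda>x. (cmod (g x))^2)"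
    using assms by (auto simp: H1_def sq_int_def)
  show ?thesis
  proof (rule Bochner_Integration.integrable_bound[OF Bochner_Integration.integrable_add[OF T.integrable_const[of 1] i] m])
    show "AE x in torus. norm (g x) \<le> norm (1 + (cmod (g x))^2)"
    proof (rule AE_I2)
      fix x
      have "cmod (g x) \<le> 1 + (cmod (g x))^2"
        proof (cases "cmod (g x) \<le> 1")
          case True then show ?thesis by (smt (verit) zero_le_power2)
        next
          case False then have "cmod (g x) * 1 \<le> cmod (g x) * cmod (g x)" by (intro mult_left_mono) auto
          then show ?thesis by (simp add: power2_eq_square)
        qed
      then show "norm (g x) \<le> norm (1 + (cmod (g x))^2)" by simp
    qed
  qed
qed


lemma alg1:
  fixes D w I J gk zz :: complex and m :: real
  assumes D: "D = w - zz - complex_of_real (m^2/2) * I" and nz: "D \<noteq> 0"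
  shows "(complex_of_real (m^2) / (2*D) * J = gk) \<longleftrightarrow>
         (w * gk + complex_of_real m * (- (complex_of_real m / 2) * (gk * I + J)) = zz * gk)"
proof -
  have "(complex_of_real (m^2) / (2*D) * J = gk) \<longleftrightarrow> 2*D*gk - complex_of_real (m^2) * J = 0"
    using nz by (auto simp: field_simps)
  also have "\<dots> \<longleftrightarrow> (2*D*gk - complex_of_real (m^2) * J)/2 = 0" by simp
  also have "(2*D*gk - complex_of_real (m^2) * J)/2 = w * gk + complex_of_real m * (- (complex_of_real m / 2) * (gk * I + J)) - zz * gk"
    unfolding D by (simp add: field_simps power2_eq_square)
  finally show ?thesis by simp
qed

lemma alg2:
  fixes W zz M a b :: complex
  assumes "W - zz \<noteq> 0"
  shows "M * ((a + b) / 2) + W * (- (M * (a + b)) / (2 * (W - zz))) = zz * (- (M * (a + b)) / (2 * (W - zz)))"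
  using assms by (simp add: field_simps)

lemma alg3:
  fixes W zz M a b f :: complex
  assumes "W - zz \<noteq> 0" "M * ((a + b) / 2) + W * f = zz * f"
  shows "f = - (M * (a + b)) / (2 * (W - zz))"
  using assms by (simp add: field_simps)

lemma F2_alt: "F2 mu z g x = (- complex_of_real mu / (2 * (complex_of_real (w2 (fst x) (snd x)) - z))) * (g (fst x) + g (snd x))"
  by (simp add: F2_def)

lemma alg_lin: "(K::complex) * (c*a + c*b) = c * (K * (a+b))" by (simp add: algebra_simps)

lemma F2_sum: "(\<Sum>i<n. c i * F2 mu z (G i) x) = F2 mu z (\<lambda>k. \<Sum>i<n. c i * G i k) x"
proof -
  let ?K = "- complex_of_real mu / (2 * (complex_of_real (w2 (fst x) (snd x)) - z))"
  have "?K * ((\<Sum>i<n. c i * G i (fst x)) + (\<Sum>i<n. c i * G i (snd x))) = (\<Sum>i<n. ?K * (c i * G i (fst x) + c i * G i (snd x)))"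
    by (simp only: sum.distrib[symmetric] sum_distrib_left)
  also have "\<dots> = (\<Sum>i<n. c i * (?K * (G i (fst x) + G i (snd x))))"
    by (rule sum.cong[OF refl]) (rule alg_lin)
  finally show ?thesis unfolding F2_alt by simp
qed

lemma alg_F2: "(X::complex) \<noteq> 0 \<Longrightarrow> - (m * (a + b)) / (2 * X) = - (m / 2) * (a * (1 / X) + b / X)"
  by (simp add: field_simps)

context
  fixes mu gamma :: real and z :: complex
  assumes mu: "mu > 0" and zS: "z \<notin> Sigma_mu mu gamma"
begin

lemma gap: obtains d where "d > 0" "\<And>a b. a \<in> T3 \<Longrightarrow> b \<in> T3 \<Longrightarrow> d \<le> cmod (complex_of_real (w2 a b) - z)"
proof -
  let ?S = "complex_of_real ` {mlow_all..Mup_all}"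
  have "compact ?S" by (intro compact_continuous_image continuous_intros compact_Icc)
  then have c: "closed ?S" by (rule compact_imp_closed)
  have "z \<notin> ?S" using zS by (simp add: Sigma_mu_def)
  then obtain d where d: "d > 0" "ball z d \<subseteq> - ?S"
  proof -
    have "open (- ?S)" using c by (simp add: open_Compl)
    then show ?thesis using \<open>z \<notin> ?S\<close> open_contains_ball that by blast
  qed
  show ?thesis
  proof (rule that[OF d(1)])
    fix a b assume "a \<in> T3" "b \<in> T3"
    then have "complex_of_real (w2 a b) \<in> ?S" using w2_in by auto
    then have "complex_of_real (w2 a b) \<notin> ball z d" using d by auto
    then show "d \<le> cmod (complex_of_real (w2 a b) - z)" by (simp add: dist_norm norm_minus_commute)
  qed
qed

lemma w2_ne: "a \<in> T3 \<Longrightarrow> b \<in> T3 \<Longrightarrow> complex_of_real (w2 a b) - z \<noteq> 0"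
  using gap by (metis norm_zero not_le)

lemma Delta_ne: assumes k: "k \<in> T3" shows "Delta_mu mu gamma k z \<noteq> 0"
proof
  assume D: "Delta_mu mu gamma k z = 0"
  have "z \<in> complex_of_real ` {mlow k .. Mup k}"
    using zS k D by (auto simp: Sigma_mu_def Lambda_mu_def)
  then obtain r where r: "z = complex_of_real r" "mlow k \<le> r" "r \<le> Mup k" by auto
  have "mlow_all \<le> mlow k" unfolding mlow_def
    by (rule cINF_greatest) (use zero_T3 w2_in k in auto)
  moreover have "Mup k \<le> Mup_all" unfolding Mup_def
    by (rule cSUP_least) (use zero_T3 w2_in k in auto)
  ultimately have "z \<in> complex_of_real ` {mlow_all..Mup_all}" using r by auto
  then show False using zS by (simp add: Sigma_mu_def)
qed

lemma inv_meas: "(\<lambda>t. 1 / (complex_of_real (w2 k t) - z)) \<in> borel_measurable torus"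
  using w2k_meas[of k] by measurable

lemma inv_int: assumes "k \<in> T3" shows "integrable torus (\<lambda>t. 1 / (complex_of_real (w2 k t) - z))"
proof -
  interpret T: finite_measure torus by (rule finite_torus)
  obtain d where d: "d > 0" "\<And>a b. a \<in> T3 \<Longrightarrow> b \<in> T3 \<Longrightarrow> d \<le> cmod (complex_of_real (w2 a b) - z)"
    using gap by blast
  show ?thesis
  proof (rule T.integrable_const_bound[OF _ inv_meas])
    show "AE x in torus. norm (1 / (complex_of_real (w2 k x) - z)) \<le> 1/d"
      using AE_space
    proof eventually_elim
      case (elim x)
      then have "d \<le> cmod (complex_of_real (w2 k x) - z)" using d assms by auto
      then show ?case using d(1) by (simp add: norm_divide frac_le)
    qed
  qed
qed

lemma J_int: assumes "k \<in> T3" "g \<in> H1" shows "integrable torus (\<lambda>t. g t / (complex_of_real (w2 k t) - z))"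
proof -
  obtain d where d: "d > 0" "\<And>a b. a \<in> T3 \<Longrightarrow> b \<in> T3 \<Longrightarrow> d \<le> cmod (complex_of_real (w2 a b) - z)"
    using gap by blast
  have m: "g \<in> borel_measurable torus" using assms by (auto simp: H1_def sq_int_def)
  show ?thesis
  proof (rule Bochner_Integration.integrable_bound[OF integrable_mult_right[OF integrable_norm[OF H1_L1[OF assms(2)]], of "1/d"]])
    show "(\<lambda>t. g t / (complex_of_real (w2 k t) - z)) \<in> borel_measurable torus"
      using borel_measurable_times[OF m inv_meas[of k]] by (simp add: divide_inverse)
    show "AE x in torus. norm (g x / (complex_of_real (w2 k x) - z)) \<le> norm (1/d * norm (g x))"
      using AE_space
    proof eventually_elim
      case (elim x)
      then have dd: "d \<le> cmod (complex_of_real (w2 k x) - z)" using d assms by auto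
      have "norm (g x / (complex_of_real (w2 k x) - z)) = cmod (g x) / cmod (complex_of_real (w2 k x) - z)"
        by (simp add: norm_divide)
      also have "\<dots> \<le> cmod (g x) / d" using dd d(1) by (intro divide_left_mono mult_pos_pos) auto
      also have "\<dots> = norm (1/d * norm (g x))" using d(1) by simp
      finally show ?case .
    qed
  qed
qed


lemma F2_meas: assumes "g \<in> borel_measurable torus" shows "F2 mu z g \<in> borel_measurable torus2"
proof -
  have a: "(\<lambda>x. g (fst x)) \<in> borel_measurable torus2" by (rule torus_meas_fst[OF assms])
  have b: "(\<lambda>x. g (snd x)) \<in> borel_measurable torus2" by (rule torus_meas_snd[OF assms])
  have c: "(\<lambda>x. complex_of_real (w2 (fst x) (snd x))) \<in> borel_measurable torus2"
    by (rule measurable_compose[OF meas_torus2[OF w2_meas] borel_measurable_of_real])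
  show ?thesis unfolding F2_def
    by (intro borel_measurable_divide borel_measurable_uminus borel_measurable_times borel_measurable_add
        borel_measurable_diff borel_measurable_const a b c)
qed

lemma int_F2: assumes k: "k \<in> T3" and g: "g \<in> H1"
  shows "integral\<^sup>L torus (\<lambda>s. F2 mu z g (k,s)) = - (complex_of_real mu / 2) *
     (g k * Iint k z + integral\<^sup>L torus (\<lambda>t. g t / (complex_of_real (w2 k t) - z)))"
proof -
  have "integral\<^sup>L torus (\<lambda>s. F2 mu z g (k,s)) = integral\<^sup>L torus (\<lambda>s. - (complex_of_real mu / 2) *
      (g k * (1 / (complex_of_real (w2 k s) - z)) + g s / (complex_of_real (w2 k s) - z)))"
  proof (rule Bochner_Integration.integral_cong[OF refl])
    fix s assume "s \<in> space torus"
    then have "complex_of_real (w2 k s) - z \<noteq> 0" using w2_ne k by simp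
    then show "F2 mu z g (k, s) = - (complex_of_real mu / 2) *
      (g k * (1 / (complex_of_real (w2 k s) - z)) + g s / (complex_of_real (w2 k s) - z))"
      unfolding F2_def fst_conv snd_conv by (rule alg_F2)
  qed
  also have "\<dots> = - (complex_of_real mu / 2) *
      (g k * integral\<^sup>L torus (\<lambda>s. 1 / (complex_of_real (w2 k s) - z)) + integral\<^sup>L torus (\<lambda>t. g t / (complex_of_real (w2 k t) - z)))"
  proof -
    have iA: "integrable torus (\<lambda>s. g k * (1 / (complex_of_real (w2 k s) - z)))"
      by (rule integrable_mult_right[OF inv_int[OF k]])
    show ?thesis
      by (simp only: integral_mult_right_zero Bochner_Integration.integral_add[OF iA J_int[OF k g]])
  qed
  finally show ?thesis by (simp add: Iint_def)
qed

lemma fst_int: fixes h :: "pt \<Rightarrow> real" assumes h: "integrable torus h"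
  shows "integrable torus2 (\<lambda>x. h (fst x))" "integrable torus2 (\<lambda>x. h (snd x))"
proof -
  interpret T: finite_measure torus by (rule finite_torus)
  interpret P: pair_sigma_finite torus torus by (rule pst)
  have hm: "h \<in> borel_measurable torus" using h by simp
  show "integrable torus2 (\<lambda>x. h (fst x))" unfolding torus2_def
  proof (rule P.Fubini_integrable)
    show "(\<lambda>x. h (fst x)) \<in> borel_measurable (torus \<Otimes>\<^sub>M torus)"
      using torus_meas_fst[OF hm] by (simp add: torus2_def)
    show "integrable torus (\<lambda>x. LINT y|torus. norm (h (fst (x, y))))"
      using h by (simp add: integrable_norm)
    show "AE x in torus. integrable torus (\<lambda>y. h (fst (x, y)))" by simp
  qed
  show "integrable torus2 (\<lambda>x. h (snd x))" unfolding torus2_def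
  proof (rule P.Fubini_integrable)
    show "(\<lambda>x. h (snd x)) \<in> borel_measurable (torus \<Otimes>\<^sub>M torus)"
      using torus_meas_snd[OF hm] by (simp add: torus2_def)
    show "integrable torus (\<lambda>x. LINT y|torus. norm (h (snd (x, y))))" by simp
    show "AE x in torus. integrable torus (\<lambda>y. h (snd (x, y)))" using h by simp
  qed
qed

lemma F2_H2: assumes g: "g \<in> H1" shows "F2 mu z g \<in> H2"
proof -
  obtain d where d: "d > 0" "\<And>a b. a \<in> T3 \<Longrightarrow> b \<in> T3 \<Longrightarrow> d \<le> cmod (complex_of_real (w2 a b) - z)"
    using gap by blast
  have gm: "g \<in> borel_measurable torus" and gi: "integrable torus (\<lambda>x. (cmod (g x))^2)"
    using g by (auto simp: H1_def sq_int_def)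
  have m: "F2 mu z g \<in> borel_measurable torus2" by (rule F2_meas[OF gm])
  let ?C = "2 * (mu / (2*d))^2"
  have bi: "integrable torus2 (\<lambda>x. ?C * ((cmod (g (fst x)))^2 + (cmod (g (snd x)))^2))"
    using fst_int[OF gi] by (intro integrable_mult_right Bochner_Integration.integrable_add) auto
  have "integrable torus2 (\<lambda>x. (cmod (F2 mu z g x))^2)"
  proof (rule Bochner_Integration.integrable_bound[OF bi])
    show "(\<lambda>x. (cmod (F2 mu z g x))^2) \<in> borel_measurable torus2" using measurable_compose[OF m borel_measurable_norm] by (rule borel_measurable_power)
    show "AE x in torus2. norm ((cmod (F2 mu z g x))^2) \<le> norm (?C * ((cmod (g (fst x)))^2 + (cmod (g (snd x)))^2))"
      using AE_space
    proof eventually_elim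
      case (elim x)
      then have dd: "d \<le> cmod (complex_of_real (w2 (fst x) (snd x)) - z)" using d by (auto simp: mem_Times_iff)
      let ?a = "cmod (g (fst x))" and ?b = "cmod (g (snd x))"
      have "cmod (F2 mu z g x) = mu * cmod (g (fst x) + g (snd x)) / (2 * cmod (complex_of_real (w2 (fst x) (snd x)) - z))"
      proof -
        have e: "cmod (2 * (complex_of_real (w2 (fst x) (snd x)) - z)) = 2 * cmod (complex_of_real (w2 (fst x) (snd x)) - z)"
          by (simp only: norm_mult) simp
        show ?thesis unfolding F2_def norm_divide norm_minus_cancel e norm_mult using mu by simp
      qed
      also have "\<dots> \<le> mu * (?a + ?b) / (2 * d)"
        using mu d(1) dd norm_triangle_ineq[of "g (fst x)" "g (snd x)"]
        by (intro frac_le mult_left_mono) auto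
      finally have n1: "cmod (F2 mu z g x) \<le> (mu / (2*d)) * (?a + ?b)" by simp
      have "(cmod (F2 mu z g x))^2 \<le> ((mu / (2*d)) * (?a + ?b))^2"
        using n1 by (intro power_mono) auto
      also have "\<dots> = (mu / (2*d))^2 * (?a + ?b)^2" by (simp only: power_mult_distrib)
      also have "\<dots> \<le> (mu / (2*d))^2 * (2 * (?a^2 + ?b^2))"
        using sum_squares_bound[of ?a ?b] by (intro mult_left_mono) (simp_all add: power2_sum)
      also have "\<dots> = ?C * (?a^2 + ?b^2)" by (simp add: algebra_simps)
      finally show ?case by simp
    qed
  qed
  moreover have "AE x in torus2. F2 mu z g x = F2 mu z g (snd x, fst x)"
    by (rule AE_I2) (simp add: F2_def w2_sym add.commute)
  ultimately show ?thesis using m by (simp add: H2_def sq_int_def)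
qed



lemma T_to_A: assumes "g \<in> eigvecs_T mu gamma z 1" shows "(g, F2 mu z g) \<in> eigvecs_A mu gamma z"
proof -
  have g: "g \<in> H1" and ae: "AE p in torus. T_op mu gamma z g p = 1 * g p"
    using assms by (auto simp: eigvecs_T_def)
  have A1: "AE k in torus. A1 mu gamma g (F2 mu z g) k = z * g k"
    using ae AE_space
  proof eventually_elim
    case (elim k)
    then have k: "k \<in> T3" by simp
    have "T_op mu gamma z g k = g k" using elim by simp
    then show ?case unfolding A1_def int_F2[OF k g]
      using alg1[OF Delta_mu_def[of mu gamma k z] Delta_ne[OF k]] unfolding T_op_def by simp
  qed
  have A2: "AE x in torus2. A2 mu g (F2 mu z g) x = z * F2 mu z g x"
    using AE_space
  proof eventually_elim
    case (elim x)
    then have "complex_of_real (w2 (fst x) (snd x)) - z \<noteq> 0" using w2_ne by (auto simp: mem_Times_iff)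
    then show ?case unfolding A2_def F2_def by (rule alg2)
  qed
  show ?thesis using g F2_H2[OF g] A1 A2 by (simp add: eigvecs_A_def)
qed

lemma A_to_T_ae: assumes "(f1, f2) \<in> eigvecs_A mu gamma z" shows "AE x in torus2. f2 x = F2 mu z f1 x"
proof -
  have "AE x in torus2. A2 mu f1 f2 x = z * f2 x" using assms by (simp add: eigvecs_A_def)
  then show ?thesis using AE_space
  proof eventually_elim
    case (elim x)
    then have "complex_of_real (w2 (fst x) (snd x)) - z \<noteq> 0" using w2_ne by (auto simp: mem_Times_iff)
    then show ?case using elim(1) unfolding A2_def F2_def by (rule alg3)
  qed
qed

lemma A_to_T: assumes "(f1, f2) \<in> eigvecs_A mu gamma z" shows "f1 \<in> eigvecs_T mu gamma z 1"
proof -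
  interpret P: pair_sigma_finite torus torus by (rule pst)
  have f1: "f1 \<in> H1" and f2: "f2 \<in> H2" and a1: "AE k in torus. A1 mu gamma f1 f2 k = z * f1 k"
    using assms by (auto simp: eigvecs_A_def)
  have f1m: "f1 \<in> borel_measurable torus" using f1 by (simp add: H1_def sq_int_def)
  have f2m: "f2 \<in> borel_measurable (torus \<Otimes>\<^sub>M torus)" using f2 by (simp add: H2_def sq_int_def torus2_def)
  have F2m: "F2 mu z f1 \<in> borel_measurable (torus \<Otimes>\<^sub>M torus)" using F2_meas[OF f1m] by (simp add: torus2_def)
  have "AE x in torus \<Otimes>\<^sub>M torus. f2 x = F2 mu z f1 x" using A_to_T_ae[OF assms] unfolding torus2_def .
  from P.AE_pair[OF this] have "AE k in torus. AE s in torus. f2 (k,s) = F2 mu z f1 (k,s)" .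
  then have "AE p in torus. T_op mu gamma z f1 p = 1 * f1 p" using a1 AE_space
  proof eventually_elim
    case (elim k)
    then have k: "k \<in> T3" by simp
    have "integral\<^sup>L torus (\<lambda>s. f2 (k,s)) = integral\<^sup>L torus (\<lambda>s. F2 mu z f1 (k,s))"
      by (rule integral_cong_AE[OF measurable_Pair2[OF f2m] measurable_Pair2[OF F2m] elim(1)]) (use k in simp_all)
    then have "A1 mu gamma f1 f2 k = z * f1 k" "A1 mu gamma f1 f2 k = complex_of_real (w1 gamma k) * f1 k +
       complex_of_real mu * (- (complex_of_real mu / 2) * (f1 k * Iint k z + integral\<^sup>L torus (\<lambda>t. f1 t / (complex_of_real (w2 k t) - z))))"
      using elim(2) int_F2[OF k f1] by (simp_all add: A1_def)
    then show ?case
      using alg1[OF Delta_mu_def[of mu gamma k z] Delta_ne[OF k]] unfolding T_op_def by simp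
  qed
  then show ?thesis using f1 by (simp add: eigvecs_T_def)
qed

lemma F2_null: assumes Sm: "S \<in> borel_measurable torus" and S0: "AE k in torus. S k = 0"
  shows "AE x in torus2. F2 mu z S x = 0"
proof -
  interpret P: pair_sigma_finite torus torus by (rule pst)
  have "AE x in torus \<Otimes>\<^sub>M torus. cmod (S (fst x)) + cmod (S (snd x)) = 0"
  proof (rule P.AE_pair_measure)
    have "(\<lambda>x. cmod (S (fst x)) + cmod (S (snd x))) \<in> borel_measurable (torus \<Otimes>\<^sub>M torus)"
      using measurable_compose[OF torus_meas_fst[OF Sm] borel_measurable_norm]
        measurable_compose[OF torus_meas_snd[OF Sm] borel_measurable_norm]
      unfolding torus2_def by (rule borel_measurable_add)
    then show "{x \<in> space (torus \<Otimes>\<^sub>M torus). cmod (S (fst x)) + cmod (S (snd x)) = 0} \<in> sets (torus \<Otimes>\<^sub>M torus)"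
      by (rule borel_measurable_eq[OF _ borel_measurable_const])
    show "AE x in torus. AE y in torus. cmod (S (fst (x, y))) + cmod (S (snd (x, y))) = 0"
      using S0
    proof eventually_elim
      case (elim x)
      show ?case using S0 by eventually_elim (simp add: elim)
    qed
  qed
  then show ?thesis unfolding torus2_def
  proof eventually_elim
    case (elim x)
    then have "S (fst x) = 0" "S (snd x) = 0"
      by (smt (verit) norm_eq_zero norm_ge_zero)+
    then show ?case by (simp add: F2_def)
  qed
qed



lemma main_eig: "is_eigenvalue_A mu gamma z \<longleftrightarrow> is_eigenvalue_T mu gamma z 1"
proof
  assume "is_eigenvalue_A mu gamma z"
  then obtain f1 f2 where f: "(f1, f2) \<in> eigvecs_A mu gamma z" and nn: "\<not> null_H (f1, f2)"
    unfolding is_eigenvalue_A_def by auto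
  have T: "f1 \<in> eigvecs_T mu gamma z 1" by (rule A_to_T[OF f])
  have f1m: "f1 \<in> borel_measurable torus" using f by (simp add: eigvecs_A_def H1_def sq_int_def)
  have "\<not> (AE p in torus. f1 p = 0)"
  proof
    assume a: "AE p in torus. f1 p = 0"
    have "AE x in torus2. f2 x = 0" using F2_null[OF f1m a] A_to_T_ae[OF f] by eventually_elim simp
    then show False using nn a by (simp add: null_H_def)
  qed
  then show "is_eigenvalue_T mu gamma z 1" using T unfolding is_eigenvalue_T_def by blast
next
  assume "is_eigenvalue_T mu gamma z 1"
  then obtain g where g: "g \<in> eigvecs_T mu gamma z 1" and nn: "\<not> (AE p in torus. g p = 0)"
    unfolding is_eigenvalue_T_def by auto
  have "(g, F2 mu z g) \<in> eigvecs_A mu gamma z" by (rule T_to_A[OF g])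
  moreover have "\<not> null_H (g, F2 mu z g)" using nn by (simp add: null_H_def)
  ultimately show "is_eigenvalue_A mu gamma z" unfolding is_eigenvalue_A_def by blast
qed

lemma main_iff:
  "(\<exists>F. (\<forall>i<n. F i \<in> eigvecs_A mu gamma z) \<and> (\<forall>c. null_H (lincomb_H n c F) \<longrightarrow> (\<forall>i<n. c i = 0)))
   \<longleftrightarrow> (\<exists>G. (\<forall>i<n. G i \<in> eigvecs_T mu gamma z 1) \<and>
      (\<forall>c. (AE p in torus. (\<Sum>i<n. c i * G i p) = 0) \<longrightarrow> (\<forall>i<n. c i = 0)))"
proof
  assume "\<exists>F. (\<forall>i<n. F i \<in> eigvecs_A mu gamma z) \<and> (\<forall>c. null_H (lincomb_H n c F) \<longrightarrow> (\<forall>i<n. c i = 0))"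
  then obtain F where F: "\<And>i. i < n \<Longrightarrow> F i \<in> eigvecs_A mu gamma z"
    and ind: "\<And>c. null_H (lincomb_H n c F) \<Longrightarrow> (\<forall>i<n. c i = 0)" by blast
  have FA: "(fst (F i), snd (F i)) \<in> eigvecs_A mu gamma z" if "i < n" for i using F[OF that] by simp
  show "\<exists>G. (\<forall>i<n. G i \<in> eigvecs_T mu gamma z 1) \<and>
      (\<forall>c. (AE p in torus. (\<Sum>i<n. c i * G i p) = 0) \<longrightarrow> (\<forall>i<n. c i = 0))"
  proof (intro exI conjI allI impI)
    show "fst (F i) \<in> eigvecs_T mu gamma z 1" if "i < n" for i by (rule A_to_T[OF FA[OF that]])
  next
    fix c assume a: "AE p in torus. (\<Sum>i<n. c i * fst (F i) p) = 0"
    fix i assume "i < n"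
    have Sm: "(\<lambda>k. \<Sum>i<n. c i * fst (F i) k) \<in> borel_measurable torus"
    proof (rule borel_measurable_sum)
      fix i assume "i \<in> {..<n}"
      then have "fst (F i) \<in> borel_measurable torus" using F[of i] by (cases "F i") (simp add: eigvecs_A_def H1_def sq_int_def)
      then show "(\<lambda>k. c i * fst (F i) k) \<in> borel_measurable torus" by (intro borel_measurable_times borel_measurable_const)
    qed
    have ae_all: "AE x in torus2. \<forall>i\<in>{..<n}. snd (F i) x = F2 mu z (fst (F i)) x"
      by (rule AE_finite_allI) (use A_to_T_ae FA in auto)
    have "AE x in torus2. (\<Sum>i<n. c i * snd (F i) x) = 0"
      using ae_all F2_null[OF Sm a]
    proof eventually_elim
      case (elim x)
      then have "(\<Sum>i<n. c i * snd (F i) x) = (\<Sum>i<n. c i * F2 mu z (fst (F i)) x)" by simp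
      also have "\<dots> = F2 mu z (\<lambda>k. \<Sum>i<n. c i * fst (F i) k) x" by (rule F2_sum)
      finally show ?case using elim by simp
    qed
    then have "null_H (lincomb_H n c F)" using a by (simp add: null_H_def lincomb_H_def)
    then have "\<forall>i<n. c i = 0" by (rule ind)
    then show "c i = 0" using \<open>i < n\<close> by blast
  qed
next
  assume "\<exists>G. (\<forall>i<n. G i \<in> eigvecs_T mu gamma z 1) \<and>
      (\<forall>c. (AE p in torus. (\<Sum>i<n. c i * G i p) = 0) \<longrightarrow> (\<forall>i<n. c i = 0))"
  then obtain G where G: "\<And>i. i < n \<Longrightarrow> G i \<in> eigvecs_T mu gamma z 1"
    and ind: "\<And>c. (AE p in torus. (\<Sum>i<n. c i * G i p) = 0) \<Longrightarrow> (\<forall>i<n. c i = 0)" by blast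
  show "\<exists>F. (\<forall>i<n. F i \<in> eigvecs_A mu gamma z) \<and> (\<forall>c. null_H (lincomb_H n c F) \<longrightarrow> (\<forall>i<n. c i = 0))"
  proof (intro exI[of _ "\<lambda>i. (G i, F2 mu z (G i))"] conjI allI impI)
    show "(G i, F2 mu z (G i)) \<in> eigvecs_A mu gamma z" if "i < n" for i by (rule T_to_A[OF G[OF that]])
  next
    fix c assume nh: "null_H (lincomb_H n c (\<lambda>i. (G i, F2 mu z (G i))))"
    fix i assume "i < n"
    from nh have "AE p in torus. (\<Sum>i<n. c i * G i p) = 0" by (simp add: null_H_def lincomb_H_def)
    then have "\<forall>i<n. c i = 0" by (rule ind)
    then show "c i = 0" using \<open>i < n\<close> by blast
  qed
qed

lemma main_mult: "mult_A mu gamma z = mult_T mu gamma z 1"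
  unfolding mult_A_def mult_T_def main_iff ..

end

theorem theorem1:
  fixes mu gamma :: real and z :: complex
  assumes "mu > 0"
    and "z \<notin> Sigma_mu mu gamma"
  shows "(is_eigenvalue_A mu gamma z \<longleftrightarrow> is_eigenvalue_T mu gamma z 1)
         \<and> mult_A mu gamma z = mult_T mu gamma z 1"
  using main_eig[OF assms] main_mult[OF assms] by simp

end
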